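(* Let $k\ge 1$ and $r\ge 2$ be integers and let $d_1\ge d_2\ge \cdots\ge d_k$ be positive integers. Then for all sufficiently large $n$, $$ex_r\Big(n,\bigcup_{i=1}^k S^+_{d_i}\Big)=\max_{1\le i\le k}\left\{\binom{n}{r}-\binom{n-i+1}{r}+ex_r\big(n-i+1,S^+_{d_i}\big)\right\}.$$
   Context: For a family (or single) $r$-uniform hypergraph $\mathcal F$, $ex_r(n,\mathcal F)$ denotes the maximum number of hyperedges in an $n$-vertex $r$-uniform hypergraph containing no member of $\mathcal F$ as a (not necessarily induced) subhypergraph. $S_\ell$ denotes the star $K_{1,\ell}$ with $\ell$ edges. For a graph $F$ and $r\ge 2$, the expansion $F^+$ is the $r$-uniform hypergraph obtained from $F$ by adding $r-2$ new vertices to each edge, all added vertices being distinct (so for $r=2$, $F^+=F$). $\bigcup_{i=1}^k S^+_{d_i}$ denotes the vertex-disjoint union of the hypergraphs $S^+_{d_1},\dots,S^+_{d_k}$. *)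

theory Defs
  imports Main
begin

definition uniform_hypergraphs :: "nat \<Rightarrow> nat \<Rightarrow> nat set set set" where
  "uniform_hypergraphs r n = {H. \<forall>e\<in>H. e \<subseteq> {0..<n} \<and> card e = r}"

definition contains_copy :: "'a set set \<Rightarrow> nat set set \<Rightarrow> bool" where
  "contains_copy F H \<longleftrightarrow> (\<exists>f. inj_on f (\<Union>F) \<and> (\<forall>e\<in>F. f ` e \<in> H))"

definition ex :: "nat \<Rightarrow> nat \<Rightarrow> 'a set set \<Rightarrow> nat" where
  "ex r n F = Max (card ` {H \<in> uniform_hypergraphs r n. \<not> contains_copy F H})"

text \<open>Expansion S_l^+ of the star K_{1,l} into an r-graph: centre 0, leaves 1..l,
  the j-th edge {0,j} receives the r-2 fresh vertices l+(j-1)(r-2)+1 .. l+j(r-2).\<close>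
definition star_plus :: "nat \<Rightarrow> nat \<Rightarrow> nat set set" where
  "star_plus r l = (\<lambda>j. {0, j} \<union> {l + (j - 1) * (r - 2) + 1 .. l + j * (r - 2)}) ` {1..l}"

text \<open>Vertex-disjoint union of S^+_{d 1}, ..., S^+_{d k}: the copy with index i uses
  vertices tagged (i, _).\<close>
definition star_forest_plus :: "nat \<Rightarrow> nat \<Rightarrow> (nat \<Rightarrow> nat) \<Rightarrow> (nat \<times> nat) set set" where
  "star_forest_plus r k d = (\<Union>i\<in>{1..k}. (\<lambda>e. Pair i ` e) ` star_plus r (d i))"

end

theory Submission
  imports Defs
begin

lemma contains_copy_trans:
  assumes "inj_on g (\<Union>A)" "\<forall>e\<in>A. g ` e \<in> B" "contains_copy B H"
  shows "contains_copy A H"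
proof -
  from assms(3) obtain f where f: "inj_on f (\<Union>B)" "\<forall>e\<in>B. f ` e \<in> H"
    unfolding contains_copy_def by blast
  have sub: "g ` (\<Union>A) \<subseteq> \<Union>B" using assms(2) by blast
  have "inj_on (f \<circ> g) (\<Union>A)"
    using assms(1) f(1) sub by (meson comp_inj_on inj_on_subset)
  moreover have "\<forall>e\<in>A. (f \<circ> g) ` e \<in> H"
  proof
    fix e assume "e \<in> A"
    have "(f \<circ> g) ` e = f ` (g ` e)" by (rule image_comp[symmetric])
    then show "(f \<circ> g) ` e \<in> H" using assms(2) f(2) \<open>e \<in> A\<close> by simp
  qed
  ultimately show ?thesis unfolding contains_copy_def by blast
qed

lemma contains_copy_mono:
  assumes "contains_copy A H" "H \<subseteq> H'" shows "contains_copy A H'"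
  using assms unfolding contains_copy_def by blast

lemma contains_copy_empty: "contains_copy {} H"
  unfolding contains_copy_def by simp

lemma finite_ex_set: "finite {H \<in> uniform_hypergraphs r n. P H}"
proof -
  have "{H \<in> uniform_hypergraphs r n. P H} \<subseteq> Pow (Pow {0..<n})"
    unfolding uniform_hypergraphs_def by auto
  then show ?thesis by (rule finite_subset) simp
qed

lemma not_contains_empty_graph: "F \<noteq> {} \<Longrightarrow> \<not> contains_copy F {}"
  unfolding contains_copy_def by auto

lemma ex_set_nonempty: "F \<noteq> {} \<Longrightarrow> {} \<in> {H \<in> uniform_hypergraphs r n. \<not> contains_copy F H}"
  using not_contains_empty_graph unfolding uniform_hypergraphs_def by auto

lemma ex_ge:
  assumes "H \<in> uniform_hypergraphs r n" "\<not> contains_copy F H"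
  shows "card H \<le> ex r n F"
  unfolding ex_def using assms finite_ex_set by (intro Max_ge) auto

lemma ex_attained:
  assumes "F \<noteq> {}"
  obtains H where "H \<in> uniform_hypergraphs r n" "\<not> contains_copy F H" "card H = ex r n F"
proof -
  let ?S = "{H \<in> uniform_hypergraphs r n. \<not> contains_copy F H}"
  have fin: "finite (card ` ?S)" by (intro finite_imageI finite_ex_set)
  have ne: "card ` ?S \<noteq> {}" using ex_set_nonempty[OF assms] by blast
  have "ex r n F \<in> card ` ?S" unfolding ex_def using fin ne by (rule Max_in)
  then show ?thesis using that by auto
qed

lemma ex_relabel:
  fixes V :: "nat set" and G :: "nat set set"
  assumes V: "finite V" and G: "\<forall>e\<in>G. e \<subseteq> V \<and> card e = r"
    and nc: "\<not> contains_copy F G"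
  shows "card G \<le> ex r (card V) F"
proof -
  obtain \<phi> where phi: "bij_betw \<phi> V {0..<card V}"
    using V by (metis ex_bij_betw_finite_nat)
  define \<psi> where "\<psi> = the_inv_into V \<phi>"
  have psi: "bij_betw \<psi> {0..<card V} V" unfolding \<psi>_def using phi by (rule bij_betw_the_inv_into)
  have psiphi: "\<psi> (\<phi> x) = x" if "x \<in> V" for x
    unfolding \<psi>_def using phi that by (meson bij_betw_imp_inj_on the_inv_into_f_f)
  have pp: "\<psi> ` \<phi> ` a = a" if "a \<subseteq> V" for a
  proof -
    have "\<psi> ` \<phi> ` a = (\<lambda>x. \<psi> (\<phi> x)) ` a" by (simp add: image_image)
    also have "\<dots> = (\<lambda>x. x) ` a" using psiphi that by (intro image_cong) auto
    finally show ?thesis by simp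
  qed
  define G' where "G' = (\<lambda>e. \<phi> ` e) ` G"
  have injG: "inj_on (\<lambda>e. \<phi> ` e) G"
  proof (rule inj_onI)
    fix a b assume "a \<in> G" "b \<in> G" "\<phi> ` a = \<phi> ` b"
    then have "\<psi> ` \<phi> ` a = \<psi> ` \<phi> ` b" by simp
    moreover have "\<psi> ` \<phi> ` a = a" using \<open>a \<in> G\<close> G by (intro pp) auto
    moreover have "\<psi> ` \<phi> ` b = b" using \<open>b \<in> G\<close> G by (intro pp) auto
    ultimately show "a = b" by simp
  qed
  have cardG: "card G' = card G" unfolding G'_def using injG by (rule card_image)
  have unif: "G' \<in> uniform_hypergraphs r (card V)"
    unfolding uniform_hypergraphs_def G'_def
  proof (intro CollectI ballI conjI)
    fix e' assume "e' \<in> (\<lambda>e. \<phi> ` e) ` G"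
    then obtain e where "e \<in> G" and e': "e' = \<phi> ` e" by blast
    then have "e \<subseteq> V" "card e = r" using G by auto
    then show "e' \<subseteq> {0..<card V}" using phi bij_betw_imp_surj_on e' by blast
    show "card e' = r" using \<open>e \<subseteq> V\<close> \<open>card e = r\<close> phi e'
      by (metis bij_betw_imp_inj_on card_image inj_on_subset)
  qed
  have nc': "\<not> contains_copy F G'"
  proof
    assume "contains_copy F G'"
    then obtain f where f: "inj_on f (\<Union>F)" "\<forall>e\<in>F. f ` e \<in> G'" unfolding contains_copy_def by blast
    have rng: "f ` (\<Union>F) \<subseteq> {0..<card V}" using f(2) unif unfolding uniform_hypergraphs_def by blast
    have "inj_on (\<psi> \<circ> f) (\<Union>F)"
      using f(1) rng psi by (meson bij_betw_imp_inj_on comp_inj_on inj_on_subset)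
    moreover have "\<forall>e\<in>F. (\<psi> \<circ> f) ` e \<in> G"
    proof
      fix e assume "e \<in> F"
      then obtain a where a: "a \<in> G" "f ` e = \<phi> ` a" using f(2) unfolding G'_def by auto
      have "(\<psi> \<circ> f) ` e = \<psi> ` (f ` e)" by (rule image_comp[symmetric])
      also have "\<dots> = \<psi> ` \<phi> ` a" using a(2) by simp
      also have "\<dots> = a" using a(1) G by (intro pp) auto
      finally show "(\<psi> \<circ> f) ` e \<in> G" using a by simp
    qed
    ultimately show False using nc unfolding contains_copy_def by blast
  qed
  show ?thesis using ex_ge[OF unif nc'] cardG by simp
qed

lemma ex_mono:
  assumes "a \<le> b" "F \<noteq> {}"
  shows "ex r a F \<le> ex r b F"
proof -
  obtain H where H: "H \<in> uniform_hypergraphs r a" "\<not> contains_copy F H" "card H = ex r a F"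
    using ex_attained[OF assms(2)] by blast
  have "H \<in> uniform_hypergraphs r b" using H(1) assms(1) unfolding uniform_hypergraphs_def by fastforce
  then show ?thesis using ex_ge H by metis
qed

lemma card_subsets_containing:
  assumes V: "finite V" and S: "S \<subseteq> V"
  shows "card {e. e \<subseteq> V \<and> card e = r \<and> S \<subseteq> e} \<le> (card V - card S) choose (r - card S)"
proof -
  have fS: "finite S" using V S finite_subset by blast
  let ?A = "{e. e \<subseteq> V \<and> card e = r \<and> S \<subseteq> e}"
  let ?B = "{B. B \<subseteq> V - S \<and> card B = r - card S}"
  have "inj_on (\<lambda>e. e - S) ?A" by (rule inj_onI) blast
  moreover have "(\<lambda>e. e - S) ` ?A \<subseteq> ?B"
  proof
    fix x assume "x \<in> (\<lambda>e. e - S) ` ?A"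
    then obtain e where e: "e \<subseteq> V" "card e = r" "S \<subseteq> e" "x = e - S" by blast
    have "card (e - S) = card e - card S" using e fS by (simp add: card_Diff_subset)
    then show "x \<in> ?B" using e by auto
  qed
  moreover have "finite ?B" using V by simp
  ultimately have "card ?A \<le> card ?B" by (meson card_inj_on_le)
  also have "card ?B = card (V - S) choose (r - card S)" using V by (simp add: n_subsets)
  also have "card (V - S) = card V - card S" using S fS by (simp add: card_Diff_subset)
  finally show ?thesis .
qed

lemma deg_bound1:
  assumes "finite V" "v \<in> V" "\<forall>e\<in>G. e \<subseteq> V \<and> card e = r"
  shows "card {e\<in>G. v \<in> e} \<le> (card V - 1) choose (r - 1)"
proof -
  have "{e\<in>G. v \<in> e} \<subseteq> {e. e \<subseteq> V \<and> card e = r \<and> {v} \<subseteq> e}" using assms by auto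
  moreover have "finite {e. e \<subseteq> V \<and> card e = r \<and> {v} \<subseteq> e}" using assms(1) by simp
  ultimately have "card {e\<in>G. v \<in> e} \<le> card {e. e \<subseteq> V \<and> card e = r \<and> {v} \<subseteq> e}" by (rule card_mono[rotated])
  also have "\<dots> \<le> (card V - card {v}) choose (r - card {v})"
    using assms by (intro card_subsets_containing) auto
  finally show ?thesis by simp
qed

lemma pair_bound:
  assumes "finite V" "u \<noteq> v"
  shows "card {e. e \<subseteq> V \<and> card e = r \<and> v \<in> e \<and> u \<in> e} \<le> (card V - 2) choose (r - 2)"
proof (cases "u \<in> V \<and> v \<in> V")
  case True
  have "{e. e \<subseteq> V \<and> card e = r \<and> v \<in> e \<and> u \<in> e} = {e. e \<subseteq> V \<and> card e = r \<and> {u,v} \<subseteq> e}" by auto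
  also have "card \<dots> \<le> (card V - card {u,v}) choose (r - card {u,v})"
    using True assms by (intro card_subsets_containing) auto
  finally show ?thesis using assms by (simp add: numeral_2_eq_2)
next
  case False
  then have "{e. e \<subseteq> V \<and> card e = r \<and> v \<in> e \<and> u \<in> e} = {}" by auto
  then show ?thesis by (simp only: card.empty)
qed

lemma binom_diff_step:
  assumes "r \<ge> 1"
  shows "(a choose r) - ((a - t) choose r) \<le> (Suc a choose r) - ((Suc a - t) choose r)"
proof (cases "a < t")
  case True
  then have "a - t = 0" "Suc a - t = 0 \<or> Suc a - t = 1" by auto
  moreover have "a choose r \<le> Suc a choose r" by (rule binomial_right_mono) simp
  moreover have "Suc a - t = 1 \<Longrightarrow> a = t - 1" using True by auto
  ultimately show ?thesis using True assms
    by (cases r) auto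
next
  case False
  then have eq: "Suc a - t = Suc (a - t)" by auto
  obtain r' where r: "r = Suc r'" using assms by (cases r) auto
  have m1: "(a - t) choose r \<le> a choose r" by (rule binomial_right_mono) simp
  have m2: "(a - t) choose r' \<le> a choose r'" by (rule binomial_right_mono) simp
  show ?thesis unfolding eq r using m1 m2 r by simp
qed

lemma binom_diff_mono:
  assumes "r \<ge> 1" "a \<le> b"
  shows "(a choose r) - ((a - t) choose r) \<le> (b choose r) - ((b - t) choose r)"
  using assms(2)
proof (induction b rule: dec_induct)
  case base then show ?case by simp
next
  case (step n)
  then show ?case using binom_diff_step[OF assms(1), of n t] by linarith
qed

lemma pascal_sub:
  assumes "m \<ge> 1" "r \<ge> 1" "i \<ge> 1"
  shows "(m choose r) - ((m - i) choose r) = ((m - 1) choose (r - 1)) + (((m - 1) choose r) - ((m - i) choose r))"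
proof -
  obtain m' where m: "m = Suc m'" using assms by (cases m) auto
  obtain r' where r: "r = Suc r'" using assms by (cases r) auto
  have "(m - i) choose r \<le> (m - 1) choose r" by (rule binomial_right_mono) (use assms in auto)
  then show ?thesis unfolding m r by simp
qed

lemma binom_ratio:
  assumes "r \<ge> 2" "m \<ge> 2"
  shows "(r - 1) * ((m - 1) choose (r - 1)) = (m - 1) * ((m - 2) choose (r - 2))"
proof -
  have "(r - 1) * ((m - 1) choose (r - 1)) = (m - 1) * ((m - 1 - 1) choose (r - 1 - 1))"
    using assms by (intro times_binomial_minus1_eq) auto
  moreover have "m - 1 - 1 = m - 2" "r - 1 - 1 = r - 2" by auto
  ultimately show ?thesis by simp
qed

lemma small_le_binom:
  assumes "r \<ge> 2" "m \<ge> 2" "c * (r - 1) \<le> m - 1"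
  shows "c * ((m - 2) choose (r - 2)) \<le> (m - 1) choose (r - 1)"
proof -
  have "(r - 1) * (c * ((m - 2) choose (r - 2))) = (c * (r - 1)) * ((m - 2) choose (r - 2))" by simp
  also have "\<dots> \<le> (m - 1) * ((m - 2) choose (r - 2))" using assms(3) by (rule mult_right_mono) simp
  also have "\<dots> = (r - 1) * ((m - 1) choose (r - 1))" using binom_ratio[OF assms(1,2)] by simp
  finally have "(r - 1) * (c * ((m - 2) choose (r - 2))) \<le> (r - 1) * ((m - 1) choose (r - 1))" .
  moreover have "0 < r - 1" using assms(1) by simp
  ultimately show ?thesis using mult_le_cancel1 by blast
qed

definition petal :: "nat \<Rightarrow> nat \<Rightarrow> nat \<Rightarrow> nat set" where
  "petal r l t = insert t {l + (t - 1) * (r - 2) + 1 .. l + t * (r - 2)}"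

lemma star_plus_petal: "star_plus r l = (\<lambda>t. insert 0 (petal r l t)) ` {1..l}"
  unfolding star_plus_def petal_def by auto

lemma petal_nz: "t \<ge> 1 \<Longrightarrow> 0 \<notin> petal r l t"
  unfolding petal_def by auto

lemma petal_card:
  assumes "t \<ge> 1" "t \<le> l"
  shows "card (petal r l t) = r - 2 + 1"
proof -
  have "t \<notin> {l + (t - 1) * (r - 2) + 1 .. l + t * (r - 2)}" using assms by auto
  moreover have "card {l + (t - 1) * (r - 2) + 1 .. l + t * (r - 2)} = r - 2"
  proof -
    have "t * (r - 2) = (t - 1) * (r - 2) + (r - 2)" using assms(1)
      by (metis add.commute le_add_diff_inverse2 mult_Suc plus_1_eq_Suc)
    then show ?thesis by simp
  qed
  ultimately show ?thesis unfolding petal_def by simp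
qed

lemma petal_sub:
  assumes "t \<ge> 1" "t \<le> l" "r \<ge> 2"
  shows "petal r l t \<subseteq> {1..l * (r - 1)}"
proof -
  have "l + t * (r - 2) \<le> l * (r - 1)"
  proof -
    have "l + t * (r - 2) \<le> l + l * (r - 2)" using assms by simp
    also have "\<dots> = l * (r - 2 + 1)" by (simp add: algebra_simps)
    also have "\<dots> \<le> l * (r - 1)" using assms(3) by (intro mult_left_mono) auto
    finally show ?thesis .
  qed
  moreover have "t \<le> l * (r - 1)"
  proof -
    have "t * 1 \<le> l * (r - 1)" using assms by (intro mult_le_mono) auto
    then show ?thesis by simp
  qed
  ultimately show ?thesis unfolding petal_def using assms by auto
qed

lemma petal_disj:
  assumes "t \<ge> 1" "t \<le> l" "t' \<ge> 1" "t' \<le> l" "t \<noteq> t'"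
  shows "petal r l t \<inter> petal r l t' = {}"
proof -
  have A: "{l + (a - 1) * (r - 2) + 1 .. l + a * (r - 2)} \<inter> {l + (b - 1) * (r - 2) + 1 .. l + b * (r - 2)} = {}"
    if "1 \<le> a" "a < b" for a b
  proof -
    have le: "a * (r - 2) \<le> (b - 1) * (r - 2)" using that by (intro mult_right_mono) auto
    {
      fix x assume x: "x \<in> {l + (a - 1) * (r - 2) + 1 .. l + a * (r - 2)}" "x \<in> {l + (b - 1) * (r - 2) + 1 .. l + b * (r - 2)}"
      then have "x \<le> l + a * (r - 2)" "l + (b - 1) * (r - 2) + 1 \<le> x" by auto
      with le have False by linarith
    }
    then show ?thesis by blast
  qed
  have P: "petal r l a \<inter> petal r l b = {}" if "1 \<le> a" "a < b" "b \<le> l" for a b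
    using A[OF that(1,2)] that unfolding petal_def by auto
  show ?thesis
  proof (cases "t < t'")
    case True
    then show ?thesis using P[of t t'] assms by auto
  next
    case False
    then have "t' < t" using assms by auto
    then show ?thesis using P[of t' t] assms by (auto simp: Int_commute)
  qed
qed

lemma star_union: "\<Union>(star_plus r l) = (if l = 0 then {} else insert 0 (\<Union>t\<in>{1..l}. petal r l t))"
  unfolding star_plus_petal by auto

lemma star_union_sub: "r \<ge> 2 \<Longrightarrow> \<Union>(star_plus r l) \<subseteq> {0..l * (r - 1)}"
proof
  fix x assume r: "r \<ge> 2" and x: "x \<in> \<Union>(star_plus r l)"
  show "x \<in> {0..l * (r - 1)}"
  proof (cases "x = 0")
    case False
    then obtain t where t: "t \<in> {1..l}" "x \<in> petal r l t" using x unfolding star_union by (auto split: if_splits)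
    then show ?thesis using petal_sub[of t l r] r by auto
  qed simp
qed

lemma star_union_card: "r \<ge> 2 \<Longrightarrow> card (\<Union>(star_plus r l)) \<le> l * (r - 1) + 1"
  using card_mono[OF _ star_union_sub] by fastforce

lemma star_nonempty: "l \<ge> 1 \<Longrightarrow> star_plus r l \<noteq> {}"
  unfolding star_plus_def by auto

lemma star_zero_in: "l \<ge> 1 \<Longrightarrow> 0 \<in> \<Union>(star_plus r l)"
  unfolding star_union by auto

lemma star_embed:
  assumes "l \<le> l'"
  shows "contains_copy (star_plus r l') H \<Longrightarrow> contains_copy (star_plus r l) H"
proof -
  assume c: "contains_copy (star_plus r l') H"
  define g where "g = (\<lambda>x::nat. if x \<le> l then x else x + (l' - l))"
  have "inj_on g UNIV" unfolding g_def by (rule inj_onI) (auto split: if_splits)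
  then have inj: "inj_on g (\<Union>(star_plus r l))" by (rule inj_on_subset) simp
  have "\<forall>e\<in>star_plus r l. g ` e \<in> star_plus r l'"
  proof
    fix e assume "e \<in> star_plus r l"
    then obtain t where t: "t \<in> {1..l}" "e = {0, t} \<union> {l + (t - 1) * (r - 2) + 1 .. l + t * (r - 2)}"
      unfolding star_plus_def by auto
    have "g ` {l + (t - 1) * (r - 2) + 1 .. l + t * (r - 2)} = (\<lambda>x. x + (l' - l)) ` {l + (t - 1) * (r - 2) + 1 .. l + t * (r - 2)}"
      unfolding g_def by (intro image_cong) auto
    also have "\<dots> = {l + (t - 1) * (r - 2) + 1 + (l' - l) .. l + t * (r - 2) + (l' - l)}"
      by (rule image_add_atLeastAtMost')
    also have "\<dots> = {l' + (t - 1) * (r - 2) + 1 .. l' + t * (r - 2)}"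
      using assms by simp
    finally have gI: "g ` {l + (t - 1) * (r - 2) + 1 .. l + t * (r - 2)} = {l' + (t - 1) * (r - 2) + 1 .. l' + t * (r - 2)}" .
    have g0: "g ` {0, t} = {0, t}" using t unfolding g_def by auto
    have "g ` e = {0, t} \<union> {l' + (t - 1) * (r - 2) + 1 .. l' + t * (r - 2)}"
      unfolding t(2) image_Un gI g0 ..
    then show "g ` e \<in> star_plus r l'" using t assms unfolding star_plus_def by auto
  qed
  then show ?thesis using contains_copy_trans[OF inj _ c] by blast
qed

lemma forest_union: "\<Union>(star_forest_plus r k d) = {(i, x). i \<in> {1..k} \<and> x \<in> \<Union>(star_plus r (d i))}"
  unfolding star_forest_plus_def by (auto; force)

lemma forest_union_card:
  assumes "\<forall>i\<in>{1..k}. d i \<le> D" "r \<ge> 2"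
  shows "card (\<Union>(star_forest_plus r k d)) \<le> k * (D * (r - 1) + 1)"
proof -
  have "\<Union>(star_forest_plus r k d) \<subseteq> {1..k} \<times> {0..D * (r - 1)}"
  proof
    fix p assume "p \<in> \<Union>(star_forest_plus r k d)"
    then obtain i x where p: "p = (i, x)" "i \<in> {1..k}" "x \<in> \<Union>(star_plus r (d i))"
      unfolding forest_union by auto
    then have "x \<le> d i * (r - 1)" using star_union_sub[OF assms(2)] by fastforce
    also have "\<dots> \<le> D * (r - 1)" using assms p by (simp add: mult_right_mono)
    finally show "p \<in> {1..k} \<times> {0..D * (r - 1)}" using p by auto
  qed
  then have "card (\<Union>(star_forest_plus r k d)) \<le> card ({1..k} \<times> {0..D * (r - 1)})"
    by (intro card_mono) auto
  then show ?thesis by (simp add: card_cartesian_product)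
qed

lemma greedy_edges:
  assumes V: "finite V" and G: "\<forall>e\<in>G. e \<subseteq> V \<and> card e = r" and r: "r \<ge> 2"
    and X: "finite X" "v \<notin> X"
    and deg: "card {e\<in>G. v \<in> e} > (card X + l * (r - 1)) * ((card V - 2) choose (r - 2))"
  shows "\<exists>E. \<forall>t\<in>{1..l}. E t \<in> G \<and> v \<in> E t \<and> E t \<inter> X = {} \<and>
            (\<forall>t'\<in>{1..l}. t \<noteq> t' \<longrightarrow> E t \<inter> E t' = {v})"
  using deg
proof (induction l)
  case 0
  then show ?case by simp
next
  case (Suc l)
  let ?C = "(card V - 2) choose (r - 2)"
  have "(card X + l * (r - 1)) * ?C \<le> (card X + Suc l * (r - 1)) * ?C"
    by (intro mult_right_mono) auto
  then have "(card X + l * (r - 1)) * ?C < card {e\<in>G. v \<in> e}" using Suc.prems by linarith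
  then obtain E where E: "\<forall>t\<in>{1..l}. E t \<in> G \<and> v \<in> E t \<and> E t \<inter> X = {} \<and>
            (\<forall>t'\<in>{1..l}. t \<noteq> t' \<longrightarrow> E t \<inter> E t' = {v})"
    using Suc.IH by blast
  define Z where "Z = X \<union> (\<Union>t\<in>{1..l}. E t - {v})"
  have cE: "card (E t - {v}) = r - 1" if "t \<in> {1..l}" for t
    using E G that by (simp add: card_Diff_singleton)
  have finE: "finite (E t)" if "t \<in> {1..l}" for t
    using E G V that by (meson finite_subset)
  have "card (\<Union>t\<in>{1..l}. E t - {v}) \<le> (\<Sum>t\<in>{1..l}. card (E t - {v}))"
    by (rule card_UN_le) simp
  also have "\<dots> = l * (r - 1)" using cE by simp
  finally have cU: "card (\<Union>t\<in>{1..l}. E t - {v}) \<le> l * (r - 1)" .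
  have finZ: "finite Z" unfolding Z_def using X finE by auto
  have cZ: "card Z \<le> card X + l * (r - 1)"
    unfolding Z_def using card_Un_le[of X "\<Union>t\<in>{1..l}. E t - {v}"] cU by linarith
  have vZ: "v \<notin> Z" unfolding Z_def using X by auto
  have bad: "{e\<in>G. v \<in> e \<and> e \<inter> Z \<noteq> {}} \<subseteq> (\<Union>u\<in>Z. {e. e \<subseteq> V \<and> card e = r \<and> v \<in> e \<and> u \<in> e})"
    using G by blast
  have "card {e\<in>G. v \<in> e \<and> e \<inter> Z \<noteq> {}} \<le> card (\<Union>u\<in>Z. {e. e \<subseteq> V \<and> card e = r \<and> v \<in> e \<and> u \<in> e})"
    using bad V finZ by (intro card_mono) auto
  also have "\<dots> \<le> (\<Sum>u\<in>Z. card {e. e \<subseteq> V \<and> card e = r \<and> v \<in> e \<and> u \<in> e})"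
    by (rule card_UN_le[OF finZ])
  also have "\<dots> \<le> (\<Sum>u\<in>Z. ?C)"
  proof (rule sum_mono)
    fix u assume "u \<in> Z"
    then have "u \<noteq> v" using vZ by auto
    then show "card {e. e \<subseteq> V \<and> card e = r \<and> v \<in> e \<and> u \<in> e} \<le> ?C" by (rule pair_bound[OF V])
  qed
  also have "\<dots> = card Z * ?C" by simp
  also have "\<dots> \<le> (card X + l * (r - 1)) * ?C" using cZ by (rule mult_right_mono) simp
  also have "\<dots> \<le> (card X + Suc l * (r - 1)) * ?C" by (intro mult_right_mono) auto
  also have "\<dots> < card {e\<in>G. v \<in> e}" using Suc.prems .
  finally have lt: "card {e\<in>G. v \<in> e \<and> e \<inter> Z \<noteq> {}} < card {e\<in>G. v \<in> e}" .
  have "\<not> {e\<in>G. v \<in> e} \<subseteq> {e\<in>G. v \<in> e \<and> e \<inter> Z \<noteq> {}}"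
  proof
    assume "{e\<in>G. v \<in> e} \<subseteq> {e\<in>G. v \<in> e \<and> e \<inter> Z \<noteq> {}}"
    moreover have "finite {e\<in>G. v \<in> e \<and> e \<inter> Z \<noteq> {}}"
    proof -
      have "{e\<in>G. v \<in> e \<and> e \<inter> Z \<noteq> {}} \<subseteq> Pow V" using G by auto
      then show ?thesis using V by (meson finite_Pow_iff finite_subset)
    qed
    ultimately have "card {e\<in>G. v \<in> e} \<le> card {e\<in>G. v \<in> e \<and> e \<inter> Z \<noteq> {}}" by (rule card_mono[rotated])
    then show False using lt by simp
  qed
  then obtain e where e: "e \<in> G" "v \<in> e" "e \<inter> Z = {}" by blast
  define E' where "E' = E(Suc l := e)"
  have "\<forall>t\<in>{1..Suc l}. E' t \<in> G \<and> v \<in> E' t \<and> E' t \<inter> X = {} \<and>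
            (\<forall>t'\<in>{1..Suc l}. t \<noteq> t' \<longrightarrow> E' t \<inter> E' t' = {v})"
  proof (intro ballI conjI impI)
    fix t assume t: "t \<in> {1..Suc l}"
    show "E' t \<in> G" "v \<in> E' t" "E' t \<inter> X = {}"
      using t E e unfolding E'_def Z_def by (auto simp: le_Suc_eq)
    fix t' assume t': "t' \<in> {1..Suc l}" "t \<noteq> t'"
    have ee: "e \<inter> E s = {v}" if "s \<in> {1..l}" for s
    proof -
      have "E s - {v} \<subseteq> Z" unfolding Z_def using that by auto
      then show ?thesis using e E that by auto
    qed
    show "E' t \<inter> E' t' = {v}"
    proof (cases "t = Suc l")
      case True
      then have "t' \<in> {1..l}" using t' by auto
      then show ?thesis using ee True t' unfolding E'_def by auto
    next
      case False
      then have tl: "t \<in> {1..l}" using t by auto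
      show ?thesis
      proof (cases "t' = Suc l")
        case True
        then show ?thesis using ee[OF tl] False unfolding E'_def by auto
      next
        case False
        then have "t' \<in> {1..l}" using t' by auto
        then show ?thesis using E tl t' \<open>t \<noteq> Suc l\<close> False unfolding E'_def by auto
      qed
    qed
  qed
  then show ?case by blast
qed

lemma star_from_edges:
  assumes r: "r \<ge> 2"
    and E: "\<forall>t\<in>{1..l}. E t \<in> G \<and> v \<in> E t \<and> card (E t) = r \<and>
            (\<forall>t'\<in>{1..l}. t \<noteq> t' \<longrightarrow> E t \<inter> E t' = {v})"
  shows "\<exists>h. inj_on h (\<Union>(star_plus r l)) \<and> (\<forall>s\<in>star_plus r l. h ` s \<in> G) \<and>
             h ` (\<Union>(star_plus r l)) \<subseteq> insert v (\<Union>t\<in>{1..l}. E t)"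
proof -
  have "\<forall>t\<in>{1..l}. \<exists>b. bij_betw b (petal r l t) (E t - {v})"
  proof
    fix t assume t: "t \<in> {1..l}"
    have c1: "card (petal r l t) = r - 2 + 1" using petal_card[of t l r] t by auto
    have "card (E t) = r" "v \<in> E t" using E t by auto
    then have c2: "card (E t - {v}) = r - 1" by (simp add: card_Diff_singleton_if)
    have "card (petal r l t) = card (E t - {v})" using c1 c2 r by simp
    moreover have "finite (petal r l t)" unfolding petal_def by simp
    moreover have "finite (E t - {v})"
    proof -
      have "card (E t) = r" using E t by auto
      then show ?thesis using r by (metis card.infinite finite_Diff not_numeral_le_zero)
    qed
    ultimately show "\<exists>b. bij_betw b (petal r l t) (E t - {v})"
      by (metis finite_same_card_bij)
  qed
  then obtain \<beta> where \<beta>: "\<forall>t\<in>{1..l}. bij_betw (\<beta> t) (petal r l t) (E t - {v})"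
    by metis
  define \<tau> where "\<tau> x = (THE t. t \<in> {1..l} \<and> x \<in> petal r l t)" for x
  have tau: "\<tau> x = t" if "t \<in> {1..l}" "x \<in> petal r l t" for x t
    unfolding \<tau>_def
  proof (rule the_equality)
    show "t \<in> {1..l} \<and> x \<in> petal r l t" using that by simp
    fix s assume "s \<in> {1..l} \<and> x \<in> petal r l s"
    then show "s = t" using petal_disj[of s l t r] that by auto
  qed
  define h where "h x = (if x = 0 then v else \<beta> (\<tau> x) x)" for x
  have hp: "h x = \<beta> t x" if "t \<in> {1..l}" "x \<in> petal r l t" for x t
    using tau[OF that] petal_nz[of t r l] that unfolding h_def by auto
  have hE: "h x \<in> E t - {v}" if "t \<in> {1..l}" "x \<in> petal r l t" for x t
  proof -
    have "bij_betw (\<beta> t) (petal r l t) (E t - {v})" using \<beta> that(1) by blast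
    then have "\<beta> t x \<in> E t - {v}" using that(2) by (rule bij_betw_apply)
    then show ?thesis using hp[OF that] by simp
  qed
  have himg: "h ` (insert 0 (petal r l t)) = E t" if "t \<in> {1..l}" for t
  proof -
    have "h ` petal r l t = \<beta> t ` petal r l t" using hp[OF that] by (intro image_cong) auto
    also have "\<dots> = E t - {v}" using \<beta> that by (simp add: bij_betw_def)
    finally show ?thesis using E that unfolding h_def by auto
  qed
  have inj: "inj_on h (\<Union>(star_plus r l))"
  proof (rule inj_onI)
    fix x y assume x: "x \<in> \<Union>(star_plus r l)" and y: "y \<in> \<Union>(star_plus r l)" and hxy: "h x = h y"
    show "x = y"
    proof (cases "x = 0")
      case True
      show ?thesis
      proof (rule ccontr)
        assume "x \<noteq> y"
        then have "y \<noteq> 0" using True by simp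
        then obtain t where "t \<in> {1..l}" "y \<in> petal r l t" using y unfolding star_union by (auto split: if_splits)
        then have "h y \<noteq> v" using hE by blast
        then show False using hxy True unfolding h_def by simp
      qed
    next
      case False
      then obtain t where t: "t \<in> {1..l}" "x \<in> petal r l t" using x unfolding star_union by (auto split: if_splits)
      have "y \<noteq> 0"
      proof
        assume "y = 0"
        then have "h x = v" using hxy unfolding h_def by simp
        then show False using hE[OF t] by blast
      qed
      then obtain t' where t': "t' \<in> {1..l}" "y \<in> petal r l t'" using y unfolding star_union by (auto split: if_splits)
      show ?thesis
      proof (cases "t = t'")
        case True
        then have "\<beta> t x = \<beta> t y" using hxy hp t t' by metis
        moreover have "inj_on (\<beta> t) (petal r l t)" using \<beta> t by (simp add: bij_betw_def)
        ultimately show ?thesis using t t' True by (meson inj_onD)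
      next
        case False
        have "h x \<in> E t - {v}" "h y \<in> E t' - {v}" using hE t t' by auto
        moreover have "E t \<inter> E t' = {v}" using E t t' False by auto
        ultimately show ?thesis using hxy by auto
      qed
    qed
  qed
  have edges: "\<forall>s\<in>star_plus r l. h ` s \<in> G"
    unfolding star_plus_petal using himg E by auto
  have img: "h ` (\<Union>(star_plus r l)) \<subseteq> insert v (\<Union>t\<in>{1..l}. E t)"
    unfolding star_plus_petal using himg by blast
  show ?thesis using inj edges img by blast
qed

lemma star_avoiding:
  assumes V: "finite V" and G: "\<forall>e\<in>G. e \<subseteq> V \<and> card e = r" and r: "r \<ge> 2"
    and X: "finite X" "v \<notin> X"
    and deg: "card {e\<in>G. v \<in> e} > (card X + l * (r - 1)) * ((card V - 2) choose (r - 2))"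
  shows "\<exists>h. inj_on h (\<Union>(star_plus r l)) \<and> (\<forall>s\<in>star_plus r l. h ` s \<in> G) \<and>
             h ` (\<Union>(star_plus r l)) \<inter> X = {}"
proof -
  obtain E where E: "\<forall>t\<in>{1..l}. E t \<in> G \<and> v \<in> E t \<and> E t \<inter> X = {} \<and>
            (\<forall>t'\<in>{1..l}. t \<noteq> t' \<longrightarrow> E t \<inter> E t' = {v})"
    using greedy_edges[OF V G r X deg] by blast
  have "\<forall>t\<in>{1..l}. E t \<in> G \<and> v \<in> E t \<and> card (E t) = r \<and>
            (\<forall>t'\<in>{1..l}. t \<noteq> t' \<longrightarrow> E t \<inter> E t' = {v})"
    using E G by blast
  from star_from_edges[OF r this] obtain h where h: "inj_on h (\<Union>(star_plus r l))" "\<forall>s\<in>star_plus r l. h ` s \<in> G"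
      "h ` (\<Union>(star_plus r l)) \<subseteq> insert v (\<Union>t\<in>{1..l}. E t)"
    by blast
  have "h ` (\<Union>(star_plus r l)) \<inter> X = {}" using h(3) E X(2) by blast
  then show ?thesis using h by blast
qed

lemma combine:
  assumes g: "inj_on g (\<Union>(star_forest_plus r k (\<lambda>i. d (Suc i))))"
      "\<forall>e\<in>star_forest_plus r k (\<lambda>i. d (Suc i)). g ` e \<in> G"
    and h: "inj_on h (\<Union>(star_plus r (d 1)))" "\<forall>s\<in>star_plus r (d 1). h ` s \<in> G"
    and disj: "h ` (\<Union>(star_plus r (d 1))) \<inter> g ` (\<Union>(star_forest_plus r k (\<lambda>i. d (Suc i)))) = {}"
  shows "contains_copy (star_forest_plus r (Suc k) d) G"
proof -
  define f where "f p = (if fst p = 1 then h (snd p) else g (fst p - 1, snd p))" for p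
  let ?U = "\<Union>(star_forest_plus r (Suc k) d)"
  let ?U' = "\<Union>(star_forest_plus r k (\<lambda>i. d (Suc i)))"
  have memU': "(i - 1, x) \<in> ?U'" if "(i, x) \<in> ?U" "i \<noteq> 1" for i x
    using that unfolding forest_union by auto
  have memS: "x \<in> \<Union>(star_plus r (d 1))" if "(1, x) \<in> ?U" for x
    using that unfolding forest_union by auto
  have "inj_on f ?U"
  proof (rule inj_onI)
    fix p q assume p: "p \<in> ?U" and q: "q \<in> ?U" and fpq: "f p = f q"
    obtain i x where pi: "p = (i, x)" by (cases p)
    obtain j y where qj: "q = (j, y)" by (cases q)
    show "p = q"
    proof (cases "i = 1")
      case True
      note i1 = True
      show ?thesis
      proof (cases "j = 1")
        case True
        have "x \<in> \<Union>(star_plus r (d 1))" "y \<in> \<Union>(star_plus r (d 1))"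
          using memS p q i1 True pi qj by auto
        moreover have "h x = h y" using fpq i1 True unfolding pi qj f_def by simp
        ultimately have "x = y" using h(1) by (meson inj_onD)
        then show ?thesis using i1 True pi qj by simp
      next
        case False
        have "h x \<in> h ` \<Union>(star_plus r (d 1))" using memS p i1 pi by auto
        moreover have "g (j - 1, y) \<in> g ` ?U'" using memU' q False qj by auto
        moreover have "h x = g (j - 1, y)" using fpq i1 False unfolding pi qj f_def by simp
        ultimately show ?thesis using disj by auto
      qed
    next
      case False
      note i1 = False
      show ?thesis
      proof (cases "j = 1")
        case True
        have "h y \<in> h ` \<Union>(star_plus r (d 1))" using memS q True qj by auto
        moreover have "g (i - 1, x) \<in> g ` ?U'" using memU' p i1 pi by auto
        moreover have "h y = g (i - 1, x)" using fpq i1 True unfolding pi qj f_def by simp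
        ultimately show ?thesis using disj by auto
      next
        case False
        have "g (i - 1, x) = g (j - 1, y)" using fpq i1 False unfolding pi qj f_def by simp
        then have "(i - 1, x) = (j - 1, y)" using g(1) memU' p q i1 False pi qj by (meson inj_onD)
        moreover have "i \<ge> 1" "j \<ge> 1" using p q pi qj unfolding forest_union by auto
        ultimately show ?thesis using i1 False pi qj by auto
      qed
    qed
  qed
  moreover have "\<forall>e\<in>star_forest_plus r (Suc k) d. f ` e \<in> G"
  proof
    fix e assume "e \<in> star_forest_plus r (Suc k) d"
    then obtain i s where iss: "i \<in> {1..Suc k}" "s \<in> star_plus r (d i)" "e = Pair i ` s"
      unfolding star_forest_plus_def by auto
    show "f ` e \<in> G"
    proof (cases "i = 1")
      case True
      have "f ` e = (\<lambda>x. f (i, x)) ` s" unfolding iss(3) by (simp add: image_image)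
      also have "\<dots> = h ` s" using True unfolding f_def by simp
      finally have "f ` e = h ` s" .
      then show ?thesis using h(2) iss True by auto
    next
      case False
      have "Pair (i - 1) ` s \<in> star_forest_plus r k (\<lambda>i. d (Suc i))"
        unfolding star_forest_plus_def using iss False by (intro UN_I[of "i - 1"]) auto
      moreover have "f ` e = g ` (Pair (i - 1) ` s)"
      proof -
        have "f ` e = (\<lambda>x. f (i, x)) ` s" unfolding iss(3) by (simp add: image_image)
        also have "\<dots> = (\<lambda>x. g (i - 1, x)) ` s" using False unfolding f_def by simp
        also have "\<dots> = g ` (Pair (i - 1) ` s)" by (simp add: image_image)
        finally show ?thesis .
      qed
      ultimately show ?thesis using g(2) by auto
    qed
  qed
  ultimately show ?thesis unfolding contains_copy_def by blast
qed

definition Phi :: "nat \<Rightarrow> nat \<Rightarrow> (nat \<Rightarrow> nat) \<Rightarrow> nat \<Rightarrow> nat" where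
  "Phi r k d m = Max ((\<lambda>i. (m choose r) - ((m - i + 1) choose r) + ex r (m - i + 1) (star_plus r (d i))) ` {1..k})"

lemma Phi_ge: "i \<in> {1..k} \<Longrightarrow> (m choose r) - ((m - i + 1) choose r) + ex r (m - i + 1) (star_plus r (d i)) \<le> Phi r k d m"
  unfolding Phi_def by (rule Max_ge) auto

lemma Phi_attained:
  assumes "k \<ge> 1"
  shows "\<exists>i\<in>{1..k}. Phi r k d m = (m choose r) - ((m - i + 1) choose r) + ex r (m - i + 1) (star_plus r (d i))"
proof -
  have "Phi r k d m \<in> (\<lambda>i. (m choose r) - ((m - i + 1) choose r) + ex r (m - i + 1) (star_plus r (d i))) ` {1..k}"
    unfolding Phi_def using assms by (intro Max_in) auto
  then show ?thesis by auto
qed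

lemma term_compare:
  assumes r: "r \<ge> 2" and i: "i \<ge> 1" "i \<le> m'" and m': "m' \<le> m - 1" and l: "l \<ge> 1"
  shows "((m - 1) choose (r - 1)) + ((m' choose r) - ((m' - i + 1) choose r) + ex r (m' - i + 1) (star_plus r l))
         \<le> (m choose r) - ((m - Suc i + 1) choose r) + ex r (m - Suc i + 1) (star_plus r l)"
proof -
  have m: "m \<ge> i + 1" using i m' by linarith
  have e1: "m - Suc i + 1 = m - i" using m by simp
  have e2: "m' - i + 1 = m' - (i - 1)" using i by simp
  have e3: "m - i = (m - 1) - (i - 1)" using i m by simp
  have b: "(m' choose r) - ((m' - (i - 1)) choose r) \<le> ((m - 1) choose r) - (((m - 1) - (i - 1)) choose r)"
    using r m' by (intro binom_diff_mono) auto
  have p: "(m choose r) - ((m - i) choose r) = ((m - 1) choose (r - 1)) + (((m - 1) choose r) - ((m - i) choose r))"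
    using r m i by (intro pascal_sub) auto
  have x: "ex r (m' - (i - 1)) (star_plus r l) \<le> ex r (m - i) (star_plus r l)"
    using m' i m star_nonempty[OF l] by (intro ex_mono) auto
  show ?thesis unfolding e1 e2 using b p x e3 by simp
qed

lemma forest_finite: "finite (\<Union>(star_forest_plus r k d))"
  unfolding star_forest_plus_def star_plus_def by auto

lemma star_finite: "finite (\<Union>(star_plus r l))"
  unfolding star_plus_def by auto

lemma forest_zero: "star_forest_plus r 0 d = {}"
  unfolding star_forest_plus_def by simp

lemma copy_image_union:
  assumes "\<forall>e\<in>F. g ` e \<in> G"
  shows "g ` (\<Union>F) \<subseteq> \<Union>G"
  using assms by blast

lemma upper:
  assumes r: "r \<ge> 2"
  shows "\<forall>d. (\<forall>i\<in>{1..k}. d i > 0) \<longrightarrow> (\<forall>i j. 1 \<le> i \<and> i \<le> j \<and> j \<le> k \<longrightarrow> d j \<le> d i) \<longrightarrow>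
    (\<exists>N. \<forall>(V::nat set) G. finite V \<longrightarrow> card V \<ge> N \<longrightarrow> (\<forall>e\<in>G. e \<subseteq> V \<and> card e = r) \<longrightarrow>
       \<not> contains_copy (star_forest_plus r k d) G \<longrightarrow> card G \<le> Phi r k d (card V))"
proof (induction k)
  case 0
  then show ?case by (simp add: forest_zero contains_copy_empty)
next
  case (Suc k)
  show ?case
  proof (intro allI impI)
    fix d :: "nat \<Rightarrow> nat"
    assume pos: "\<forall>i\<in>{1..Suc k}. d i > 0"
      and mono: "\<forall>i j. 1 \<le> i \<and> i \<le> j \<and> j \<le> Suc k \<longrightarrow> d j \<le> d i"
    define d' where "d' = (\<lambda>i. d (Suc i))"
    have pos': "\<forall>i\<in>{1..k}. d' i > 0" using pos unfolding d'_def by auto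
    have mono': "\<forall>i j. 1 \<le> i \<and> i \<le> j \<and> j \<le> k \<longrightarrow> d' j \<le> d' i" using mono unfolding d'_def by auto
    from mp[OF mp[OF spec[OF Suc.IH, of d'] pos'] mono'] obtain N' where N': "\<forall>(V::nat set) G. finite V \<longrightarrow> card V \<ge> N' \<longrightarrow> (\<forall>e\<in>G. e \<subseteq> V \<and> card e = r) \<longrightarrow>
       \<not> contains_copy (star_forest_plus r k d') G \<longrightarrow> card G \<le> Phi r k d' (card V)"
      by blast
    define D where "D = d 1"
    have "d 1 > 0" using pos by simp
    then have D0: "D \<ge> 1" unfolding D_def by simp
    have dD: "\<forall>i\<in>{1..k}. d' i \<le> D" using mono unfolding d'_def D_def by auto
    define cX where "cX = k * (D * (r - 1) + 1)"
    define Y where "Y = cX + D * (r - 1)"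
    define wB where "wB = D * (r - 1) + 1"
    define N where "N = N' + k + wB + wB * Y * (r - 1) + 2"
    have "\<forall>(V::nat set) G. finite V \<longrightarrow> card V \<ge> N \<longrightarrow> (\<forall>e\<in>G. e \<subseteq> V \<and> card e = r) \<longrightarrow>
       \<not> contains_copy (star_forest_plus r (Suc k) d) G \<longrightarrow> card G \<le> Phi r (Suc k) d (card V)"
    proof (intro allI impI)
      fix V :: "nat set" and G
      assume V: "finite V" and mN: "card V \<ge> N" and G: "\<forall>e\<in>G. e \<subseteq> V \<and> card e = r"
        and nc: "\<not> contains_copy (star_forest_plus r (Suc k) d) G"
      define m where "m = card V"
      have m1: "m \<ge> 1" using mN unfolding m_def N_def by simp
      have finG: "finite G"
      proof -
        have "G \<subseteq> Pow V" using G by auto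
        then show ?thesis using V by (meson finite_Pow_iff finite_subset)
      qed
      let ?C = "(m - 2) choose (r - 2)"
      show "card G \<le> Phi r (Suc k) d (card V)"
      proof (cases "contains_copy (star_plus r (d 1)) G")
        case False
        have "card G \<le> ex r m (star_plus r (d 1))" unfolding m_def using ex_relabel[OF V G False] .
        also have "\<dots> = (m choose r) - ((m - 1 + 1) choose r) + ex r (m - 1 + 1) (star_plus r (d 1))"
          using m1 by simp
        also have "\<dots> \<le> Phi r (Suc k) d m" by (rule Phi_ge) simp
        finally show ?thesis unfolding m_def .
      next
        case True
        then obtain h0 where h0: "inj_on h0 (\<Union>(star_plus r (d 1)))" "\<forall>s\<in>star_plus r (d 1). h0 ` s \<in> G"
          unfolding contains_copy_def by blast
        show ?thesis
        proof (cases "\<exists>v\<in>V. card {e\<in>G. v \<in> e} > Y * ?C")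
          case True
          then obtain v where v: "v \<in> V" "card {e\<in>G. v \<in> e} > Y * ?C" by blast
          define G1 where "G1 = {e\<in>G. v \<notin> e}"
          have G1: "\<forall>e\<in>G1. e \<subseteq> V - {v} \<and> card e = r" using G unfolding G1_def by auto
          have cV1: "card (V - {v}) = m - 1" using v V unfolding m_def by simp
          have nc1: "\<not> contains_copy (star_forest_plus r k d') G1"
          proof
            assume "contains_copy (star_forest_plus r k d') G1"
            then obtain g where g: "inj_on g (\<Union>(star_forest_plus r k d'))" "\<forall>e\<in>star_forest_plus r k d'. g ` e \<in> G1"
              unfolding contains_copy_def by blast
            define X where "X = g ` (\<Union>(star_forest_plus r k d'))"
            have finX: "finite X" unfolding X_def using forest_finite by blast
            have cXX: "card X \<le> cX"
            proof -
              have "card X \<le> card (\<Union>(star_forest_plus r k d'))" unfolding X_def by (rule card_image_le[OF forest_finite])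
              also have "\<dots> \<le> cX" unfolding cX_def by (rule forest_union_card[OF dD r])
              finally show ?thesis .
            qed
            have vX: "v \<notin> X" using copy_image_union[OF g(2)] unfolding X_def G1_def by blast
            have "(card X + d 1 * (r - 1)) * ?C \<le> Y * ?C"
              unfolding Y_def D_def using cXX by (intro mult_right_mono) auto
            then have deg: "card {e\<in>G. v \<in> e} > (card X + d 1 * (r - 1)) * ((card V - 2) choose (r - 2))"
              using v(2) unfolding m_def by linarith
            obtain h where h: "inj_on h (\<Union>(star_plus r (d 1)))" "\<forall>s\<in>star_plus r (d 1). h ` s \<in> G"
                "h ` (\<Union>(star_plus r (d 1))) \<inter> X = {}"
              using star_avoiding[OF V G r finX vX deg] by blast
            have g2: "\<forall>e\<in>star_forest_plus r k (\<lambda>i. d (Suc i)). g ` e \<in> G"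
              using g(2) unfolding G1_def d'_def by auto
            have "contains_copy (star_forest_plus r (Suc k) d) G"
              using combine[of g r k d G h] g(1) g2 h unfolding d'_def X_def by blast
            then show False using nc by simp
          qed
          have k1: "k \<ge> 1"
          proof (rule ccontr)
            assume "\<not> k \<ge> 1"
            then have "k = 0" by simp
            then show False using nc1 by (simp add: forest_zero contains_copy_empty)
          qed
          have fV1: "finite (V - {v})" using V by simp
          have "card (V - {v}) \<ge> N'" using cV1 mN unfolding m_def N_def by simp
          then have IH1: "card G1 \<le> Phi r k d' (m - 1)" using N' fV1 G1 nc1 cV1 by metis
          obtain i where i: "i \<in> {1..k}" "Phi r k d' (m - 1) = ((m - 1) choose r) - ((m - 1 - i + 1) choose r) + ex r (m - 1 - i + 1) (star_plus r (d' i))"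
            using Phi_attained[OF k1] by blast
          have "0 < d' i" using pos' i(1) by blast
          then have dpos: "1 \<le> d' i" by simp
          have split: "card G = card {e\<in>G. v \<in> e} + card G1"
          proof -
            have "G = {e\<in>G. v \<in> e} \<union> G1" "{e\<in>G. v \<in> e} \<inter> G1 = {}" unfolding G1_def by auto
            then show ?thesis using finG by (metis card_Un_disjoint finite_Un)
          qed
          have degv: "card {e\<in>G. v \<in> e} \<le> (m - 1) choose (r - 1)"
            using deg_bound1[OF V v(1) G] unfolding m_def .
          have "i \<le> m - 1" using i mN unfolding m_def N_def by auto
          then have tc: "((m - 1) choose (r - 1)) + (((m - 1) choose r) - ((m - 1 - i + 1) choose r) + ex r (m - 1 - i + 1) (star_plus r (d' i)))
              \<le> (m choose r) - ((m - Suc i + 1) choose r) + ex r (m - Suc i + 1) (star_plus r (d' i))"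
            using i dpos by (intro term_compare[OF r]) auto
          have "(m choose r) - ((m - Suc i + 1) choose r) + ex r (m - Suc i + 1) (star_plus r (d' i)) \<le> Phi r (Suc k) d m"
            using Phi_ge[of "Suc i" "Suc k" m r d] i unfolding d'_def by auto
          then show ?thesis using split degv IH1 i(2) tc unfolding m_def by linarith
        next
          case False
          then have low: "\<forall>u\<in>V. card {e\<in>G. u \<in> e} \<le> Y * ?C" by auto
          define W where "W = h0 ` (\<Union>(star_plus r (d 1)))"
          have WV: "W \<subseteq> V" using copy_image_union[OF h0(2)] G unfolding W_def by blast
          have cW: "card W \<le> wB" unfolding W_def wB_def D_def
            using card_image_le[OF star_finite] star_union_card[OF r] by (meson le_trans)
          have W0: "W \<noteq> {}" unfolding W_def using star_zero_in[of "d 1" r] D0 unfolding D_def by blast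
          have cW1: "card W \<ge> 1" using W0 WV V by (meson card_0_eq finite_subset less_one not_le)
          define G2 where "G2 = {e\<in>G. e \<inter> W = {}}"
          have G2: "\<forall>e\<in>G2. e \<subseteq> V - W \<and> card e = r" using G unfolding G2_def by auto
          have cV2: "card (V - W) = m - card W" using WV V unfolding m_def by (simp add: card_Diff_subset finite_subset)
          have nc2: "\<not> contains_copy (star_forest_plus r k d') G2"
          proof
            assume "contains_copy (star_forest_plus r k d') G2"
            then obtain g where g: "inj_on g (\<Union>(star_forest_plus r k d'))" "\<forall>e\<in>star_forest_plus r k d'. g ` e \<in> G2"
              unfolding contains_copy_def by blast
            have disj: "W \<inter> g ` (\<Union>(star_forest_plus r k d')) = {}"
              using copy_image_union[OF g(2)] unfolding G2_def by blast
            have g2: "\<forall>e\<in>star_forest_plus r k (\<lambda>i. d (Suc i)). g ` e \<in> G"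
              using g(2) unfolding G2_def d'_def by auto
            have "contains_copy (star_forest_plus r (Suc k) d) G"
              using combine[of g r k d G h0] g(1) g2 h0 disj unfolding d'_def W_def by blast
            then show False using nc by simp
          qed
          have k1: "k \<ge> 1"
          proof (rule ccontr)
            assume "\<not> k \<ge> 1"
            then have "k = 0" by simp
            then show False using nc2 by (simp add: forest_zero contains_copy_empty)
          qed
          have fV2: "finite (V - W)" using V by simp
          define m' where "m' = m - card W"
          have m'big: "m' \<ge> N' + k" using mN cW unfolding m'_def m_def N_def by linarith
          have "card (V - W) \<ge> N'" using cV2 m'big unfolding m'_def by simp
          then have IH2: "card G2 \<le> Phi r k d' m'" using N' fV2 G2 nc2 cV2 unfolding m'_def by metis
          obtain i where i: "i \<in> {1..k}" "Phi r k d' m' = (m' choose r) - ((m' - i + 1) choose r) + ex r (m' - i + 1) (star_plus r (d' i))"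
            using Phi_attained[OF k1] by blast
          have "0 < d' i" using pos' i(1) by blast
          then have dpos: "1 \<le> d' i" by simp
          have split: "card G \<le> card G2 + card {e\<in>G. e \<inter> W \<noteq> {}}"
          proof -
            have "G = G2 \<union> {e\<in>G. e \<inter> W \<noteq> {}}" unfolding G2_def by auto
            then show ?thesis by (metis card_Un_le)
          qed
          have "card {e\<in>G. e \<inter> W \<noteq> {}} \<le> card (\<Union>u\<in>W. {e\<in>G. u \<in> e})"
          proof (rule card_mono)
            show "finite (\<Union>u\<in>W. {e\<in>G. u \<in> e})" using finG by (rule finite_subset[rotated]) auto
          qed auto
          also have "\<dots> \<le> (\<Sum>u\<in>W. card {e\<in>G. u \<in> e})"
            using WV V by (intro card_UN_le) (meson finite_subset)
          also have "\<dots> \<le> (\<Sum>u\<in>W. Y * ?C)" using low WV by (intro sum_mono) auto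
          also have "\<dots> = card W * (Y * ?C)" by simp
          also have "\<dots> \<le> wB * (Y * ?C)" using cW by (rule mult_right_mono) simp
          also have "\<dots> = (wB * Y) * ?C" by simp
          also have "\<dots> \<le> (m - 1) choose (r - 1)"
            using mN r unfolding m_def N_def by (intro small_le_binom) auto
          finally have bad: "card {e\<in>G. e \<inter> W \<noteq> {}} \<le> (m - 1) choose (r - 1)" .
          have "i \<le> m'" using i m'big by auto
          moreover have "m' \<le> m - 1" using cW1 unfolding m'_def by simp
          ultimately have tc: "((m - 1) choose (r - 1)) + ((m' choose r) - ((m' - i + 1) choose r) + ex r (m' - i + 1) (star_plus r (d' i)))
              \<le> (m choose r) - ((m - Suc i + 1) choose r) + ex r (m - Suc i + 1) (star_plus r (d' i))"
            using i dpos by (intro term_compare[OF r]) auto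
          have "(m choose r) - ((m - Suc i + 1) choose r) + ex r (m - Suc i + 1) (star_plus r (d' i)) \<le> Phi r (Suc k) d m"
            using Phi_ge[of "Suc i" "Suc k" m r d] i unfolding d'_def by auto
          then show ?thesis using split bad IH2 i(2) tc unfolding m_def by linarith
        qed
      qed
    qed
    then show "\<exists>N. \<forall>(V::nat set) G. finite V \<longrightarrow> card V \<ge> N \<longrightarrow> (\<forall>e\<in>G. e \<subseteq> V \<and> card e = r) \<longrightarrow>
       \<not> contains_copy (star_forest_plus r (Suc k) d) G \<longrightarrow> card G \<le> Phi r (Suc k) d (card V)" by blast
  qed
qed

lemma lower:
  assumes r: "r \<ge> 2" and i: "i \<in> {1..k}" and n: "n \<ge> k"
    and pos: "\<forall>i\<in>{1..k}. d i > 0"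
    and mono: "\<forall>i j. 1 \<le> i \<and> i \<le> j \<and> j \<le> k \<longrightarrow> d j \<le> d i"
  shows "(n choose r) - ((n - i + 1) choose r) + ex r (n - i + 1) (star_plus r (d i)) \<le> ex r n (star_forest_plus r k d)"
proof -
  define a where "a = i - 1"
  define n0 where "n0 = n - i + 1"
  have n0a: "n0 = n - a" using i n unfolding n0_def a_def by auto
  have an: "a \<le> n" using i n unfolding a_def by auto
  define S where "S = star_plus r (d i)"
  have "d i > 0" using pos i by blast
  then have Sne: "S \<noteq> {}" unfolding S_def by (intro star_nonempty) simp
  obtain H0 where H0: "H0 \<in> uniform_hypergraphs r n0" "\<not> contains_copy S H0" "card H0 = ex r n0 S"
    using ex_attained[OF Sne] by blast
  define sh where "sh = (\<lambda>x::nat. x + a)"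
  have injsh: "inj sh" unfolding sh_def by (rule injI) simp
  define H1 where "H1 = (\<lambda>e. sh ` e) ` H0"
  define A where "A = {e. e \<subseteq> {0..<n} \<and> card e = r \<and> e \<inter> {0..<a} \<noteq> {}}"
  define H where "H = A \<union> H1"
  have H1sub: "e \<subseteq> {a..<n} \<and> card e = r" if eH: "e \<in> H1" for e
  proof -
    obtain e0 where e0: "e0 \<in> H0" "e = sh ` e0" using eH unfolding H1_def by blast
    then have "e0 \<subseteq> {0..<n0}" "card e0 = r" using H0(1) unfolding uniform_hypergraphs_def by auto
    moreover have "card (sh ` e0) = card e0" using injsh by (meson card_image inj_on_subset subset_UNIV)
    ultimately show ?thesis using e0 n0a an unfolding sh_def by auto
  qed
  have Hunif: "H \<in> uniform_hypergraphs r n"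
    unfolding uniform_hypergraphs_def H_def A_def using H1sub by fastforce
  have cH1: "card H1 = card H0"
  proof -
    have "inj_on (\<lambda>e. sh ` e) H0" by (rule inj_onI) (simp add: inj_image_eq_iff[OF injsh])
    then show ?thesis unfolding H1_def by (rule card_image)
  qed
  have AH1: "A \<inter> H1 = {}"
  proof (rule ccontr)
    assume "A \<inter> H1 \<noteq> {}"
    then obtain e where e: "e \<in> A" "e \<in> H1" by blast
    then have "e \<subseteq> {a..<n}" using H1sub by blast
    moreover obtain x where "x \<in> e" "x < a" using e(1) unfolding A_def by auto
    ultimately show False by auto
  qed
  have finA: "finite A" unfolding A_def by (rule finite_subset[of _ "Pow {0..<n}"]) auto
  have "H0 \<subseteq> Pow {0..<n0}" using H0(1) unfolding uniform_hypergraphs_def by auto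
  then have "finite H0" by (rule finite_subset) simp
  then have finH1: "finite H1" unfolding H1_def by (rule finite_imageI)
  have cA: "card A = (n choose r) - (n0 choose r)"
  proof -
    have key: "(e \<inter> {0..<a} = {}) = (e \<subseteq> {a..<n})" if "e \<subseteq> {0..<n}" for e
    proof
      assume "e \<inter> {0..<a} = {}"
      then show "e \<subseteq> {a..<n}" using that by (auto simp: disjoint_iff subset_iff not_le)
    qed auto
    have "A = {e. e \<subseteq> {0..<n} \<and> card e = r} - {e. e \<subseteq> {a..<n} \<and> card e = r}"
      unfolding A_def using key by auto
    moreover have "{e. e \<subseteq> {a..<n} \<and> card e = r} \<subseteq> {e. e \<subseteq> {0..<n} \<and> card e = r}" by auto
    ultimately have "card A = card {e. e \<subseteq> {0..<n} \<and> card e = r} - card {e. e \<subseteq> {a..<n} \<and> card e = r}"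
      by (simp add: card_Diff_subset)
    also have "\<dots> = (n choose r) - ((n - a) choose r)" by (simp add: n_subsets)
    finally show ?thesis using n0a by simp
  qed
  have cH: "card H = (n choose r) - (n0 choose r) + ex r n0 S"
    unfolding H_def using card_Un_disjoint[OF finA finH1 AH1] cA cH1 H0(3) by simp
  have nc: "\<not> contains_copy (star_forest_plus r k d) H"
  proof
    assume "contains_copy (star_forest_plus r k d) H"
    then obtain f where f: "inj_on f (\<Union>(star_forest_plus r k d))" "\<forall>e\<in>star_forest_plus r k d. f ` e \<in> H"
      unfolding contains_copy_def by blast
    define P where "P j = f ` (Pair j ` \<Union>(star_plus r (d j)))" for j
    have memU: "(j, x) \<in> \<Union>(star_forest_plus r k d)" if "j \<in> {1..k}" "x \<in> \<Union>(star_plus r (d j))" for j x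
      using that unfolding forest_union by auto
    have "\<exists>j\<in>{1..i}. P j \<inter> {0..<a} = {}"
    proof (rule ccontr)
      assume "\<not> (\<exists>j\<in>{1..i}. P j \<inter> {0..<a} = {})"
      then have "\<forall>j\<in>{1..i}. \<exists>p. p \<in> P j \<inter> {0..<a}" by blast
      then obtain p where p: "\<forall>j\<in>{1..i}. p j \<in> P j \<inter> {0..<a}" by metis
      have "inj_on p {1..i}"
      proof (rule inj_onI)
        fix j j' assume j: "j \<in> {1..i}" and j': "j' \<in> {1..i}" and pj: "p j = p j'"
        have "p j \<in> f ` (Pair j ` \<Union>(star_plus r (d j)))" using p j unfolding P_def by blast
        then obtain x where x: "x \<in> \<Union>(star_plus r (d j))" "p j = f (j, x)" by blast
        have "p j' \<in> f ` (Pair j' ` \<Union>(star_plus r (d j')))" using p j' unfolding P_def by blast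
        then obtain y where y: "y \<in> \<Union>(star_plus r (d j'))" "p j' = f (j', y)" by blast
        have "j \<in> {1..k}" "j' \<in> {1..k}" using j j' i by auto
        then have "(j, x) = (j', y)" using f(1) memU x y pj by (metis inj_onD)
        then show "j = j'" by simp
      qed
      moreover have "p ` {1..i} \<subseteq> {0..<a}" using p by auto
      ultimately have "card {1..i} \<le> card {0..<a}" by (meson card_inj_on_le finite_atLeastLessThan)
      then show False unfolding a_def using i by auto
    qed
    then obtain j where j: "j \<in> {1..i}" "P j \<inter> {0..<a} = {}" by blast
    have jk: "j \<in> {1..k}" using j i by auto
    have dij: "d i \<le> d j" using mono j i by auto
    define \<phi> where "\<phi> x = f (j, x) - a" for x
    have ge: "f (j, x) \<ge> a" if "x \<in> \<Union>(star_plus r (d j))" for x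
    proof -
      have "f (j, x) \<in> P j" using that unfolding P_def by auto
      then show ?thesis using j(2) by (meson disjoint_iff atLeastLessThan_iff not_le zero_le)
    qed
    have "inj_on \<phi> (\<Union>(star_plus r (d j)))"
    proof (rule inj_onI)
      fix x y assume x: "x \<in> \<Union>(star_plus r (d j))" and y: "y \<in> \<Union>(star_plus r (d j))" and e: "\<phi> x = \<phi> y"
      have "f (j, x) = f (j, y)" using e ge[OF x] ge[OF y] unfolding \<phi>_def by simp
      then have "(j, x) = (j, y)" using f(1) memU[OF jk x] memU[OF jk y] by (meson inj_onD)
      then show "x = y" by simp
    qed
    moreover have "\<forall>s\<in>star_plus r (d j). \<phi> ` s \<in> H0"
    proof
      fix s assume s: "s \<in> star_plus r (d j)"
      have "Pair j ` s \<in> star_forest_plus r k d" unfolding star_forest_plus_def using s jk by blast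
      then have fe: "f ` (Pair j ` s) \<in> H" using f(2) by blast
      have "f ` (Pair j ` s) \<subseteq> P j" unfolding P_def using s by auto
      then have "f ` (Pair j ` s) \<inter> {0..<a} = {}" using j(2) by blast
      then have "f ` (Pair j ` s) \<notin> A" unfolding A_def by blast
      then have "f ` (Pair j ` s) \<in> H1" using fe unfolding H_def by blast
      then obtain e0 where e0: "e0 \<in> H0" "f ` (Pair j ` s) = sh ` e0" unfolding H1_def by blast
      have "\<phi> ` s = (\<lambda>y. y - a) ` (f ` (Pair j ` s))" unfolding \<phi>_def by (simp add: image_image)
      also have "\<dots> = (\<lambda>y. y - a) ` (sh ` e0)" using e0(2) by simp
      also have "\<dots> = e0" unfolding sh_def by (simp add: image_image)
      finally show "\<phi> ` s \<in> H0" using e0(1) by simp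
    qed
    ultimately have "contains_copy (star_plus r (d j)) H0" unfolding contains_copy_def by blast
    then have "contains_copy S H0" unfolding S_def using star_embed[OF dij] by blast
    then show False using H0(2) by simp
  qed
  have "card H \<le> ex r n (star_forest_plus r k d)" by (rule ex_ge[OF Hunif nc])
  then show ?thesis using cH unfolding n0_def S_def by simp
qed

theorem theorem1p5:
  fixes k r :: nat and d :: "nat \<Rightarrow> nat"
  assumes "k \<ge> 1" and "r \<ge> 2"
    and "\<forall>i\<in>{1..k}. d i > 0"
    and "\<forall>i j. 1 \<le> i \<and> i \<le> j \<and> j \<le> k \<longrightarrow> d j \<le> d i"
  shows "\<exists>N. \<forall>n\<ge>N. ex r n (star_forest_plus r k d) =
           Max ((\<lambda>i. (n choose r) - ((n - i + 1) choose r) + ex r (n - i + 1) (star_plus r (d i))) ` {1..k})"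
proof -
  have up: "\<exists>N. \<forall>(V::nat set) G. finite V \<longrightarrow> card V \<ge> N \<longrightarrow> (\<forall>e\<in>G. e \<subseteq> V \<and> card e = r) \<longrightarrow>
       \<not> contains_copy (star_forest_plus r k d) G \<longrightarrow> card G \<le> Phi r k d (card V)"
    using mp[OF mp[OF spec[OF upper[OF assms(2), of k], of d] assms(3)] assms(4)] .
  then obtain N where N: "\<forall>(V::nat set) G. finite V \<longrightarrow> card V \<ge> N \<longrightarrow> (\<forall>e\<in>G. e \<subseteq> V \<and> card e = r) \<longrightarrow>
       \<not> contains_copy (star_forest_plus r k d) G \<longrightarrow> card G \<le> Phi r k d (card V)" by blast
  have d1: "d 1 > 0" using assms(1,3) by simp
  then have "star_plus r (d 1) \<noteq> {}" by (intro star_nonempty) simp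
  then obtain s where s: "s \<in> star_plus r (d 1)" by blast
  have "Pair 1 ` s \<in> star_forest_plus r k d" unfolding star_forest_plus_def using s assms(1) by (intro UN_I[of 1]) auto
  then have Fne: "star_forest_plus r k d \<noteq> {}" by blast
  have "\<forall>n\<ge>max N k. ex r n (star_forest_plus r k d) = Phi r k d n"
  proof (intro allI impI)
    fix n assume n: "n \<ge> max N k"
    obtain H where H: "H \<in> uniform_hypergraphs r n" "\<not> contains_copy (star_forest_plus r k d) H"
      "card H = ex r n (star_forest_plus r k d)"
      using ex_attained[OF Fne] by blast
    have HG: "\<forall>e\<in>H. e \<subseteq> {0..<n} \<and> card e = r" using H(1) unfolding uniform_hypergraphs_def by blast
    have "card {0..<n} \<ge> N" using n by simp
    then have "card H \<le> Phi r k d (card {0..<n})" using N HG H(2) by blast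
    then have le: "ex r n (star_forest_plus r k d) \<le> Phi r k d n" using H(3) by simp
    obtain i where i: "i \<in> {1..k}" "Phi r k d n = (n choose r) - ((n - i + 1) choose r) + ex r (n - i + 1) (star_plus r (d i))"
      using Phi_attained[OF assms(1)] by blast
    have "Phi r k d n \<le> ex r n (star_forest_plus r k d)"
      unfolding i(2) using n by (intro lower[OF assms(2) i(1) _ assms(3,4)]) simp
    then show "ex r n (star_forest_plus r k d) = Phi r k d n" using le by simp
  qed
  then show ?thesis unfolding Phi_def by blast
qed

end
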